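(* The structure $\mathbb{M}_0=(\{0,1,2\};\psi_2,\rho_2,\{0,1\},\{0\},\{1\},\{2\})$ pp-constructs $\mathbb{M}_0'=(\{0,1,2\};\psi_2,\rho_2,\tau_0,\tau_1,\{0,1\},\{0\},\{1\},\{2\})$, and $\mathbb{M}_0'$ pp-constructs $\mathbb{M}_0$.
   Context: $\psi_2=\{(0,1),(1,0),(2,2)\}$; $\mu_2$ is the equivalence relation on $\{0,1,2\}$ with classes $\{0,1\},\{2\}$ and $\rho_2=\{0,1,2\}^2\setminus\mu_2$; $\tau_0=\{(0,0),(1,0),(2,1)\}$; $\tau_1=\{(0,1),(1,1),(2,0)\}$. A relation is pp-definable in $\mathbb{A}$ if definable by a formula using the relations of $\mathbb{A}$, equality, conjunction and existential quantification. A pp-power of $\mathbb{A}$ is a structure isomorphic to one with domain $A^n$ whose $k$-ary relations, viewed as $kn$-ary relations on $A$, are pp-definable in $\mathbb{A}$. $\mathbb{A}$ pp-constructs $\mathbb{B}$ if $\mathbb{B}$ is homomorphically equivalent (homomorphisms in both directions) to a pp-power of $\mathbb{A}$. *)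

theory Defs
  imports Main
begin

type_synonym 'a rstruct = "'a set \<times> (nat \<times> 'a list set) list"

datatype ppf = PAtom nat "nat list" | PEq nat nat | PConj ppf ppf | PEx nat ppf

fun pp_sat :: "'a rstruct \<Rightarrow> ppf \<Rightarrow> (nat \<Rightarrow> 'a) \<Rightarrow> bool" where
  "pp_sat S (PAtom i xs) v =
     (i < length (snd S) \<and> length xs = fst (snd S ! i) \<and> map v xs \<in> snd (snd S ! i))"
| "pp_sat S (PEq x y) v = (v x = v y)"
| "pp_sat S (PConj p q) v = (pp_sat S p v \<and> pp_sat S q v)"
| "pp_sat S (PEx x p) v = (\<exists>a\<in>fst S. pp_sat S p (v(x := a)))"

definition pp_definable :: "'a rstruct \<Rightarrow> nat \<Rightarrow> 'a list set \<Rightarrow> bool" where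
  "pp_definable S k R \<longleftrightarrow>
     (\<exists>\<phi> xs. length xs = k \<and>
        R = {map v xs | v. (\<forall>y. v y \<in> fst S) \<and> pp_sat S \<phi> v})"

definition is_hom :: "('a \<Rightarrow> 'b) \<Rightarrow> 'a rstruct \<Rightarrow> 'b rstruct \<Rightarrow> bool" where
  "is_hom h A B \<longleftrightarrow>
     (\<forall>a\<in>fst A. h a \<in> fst B) \<and> length (snd A) = length (snd B) \<and>
     (\<forall>i<length (snd A). fst (snd A ! i) = fst (snd B ! i) \<and>
        (\<forall>t\<in>snd (snd A ! i). map h t \<in> snd (snd B ! i)))"

definition hom_equiv :: "'a rstruct \<Rightarrow> 'b rstruct \<Rightarrow> bool" where
  "hom_equiv A B \<longleftrightarrow> (\<exists>h. is_hom h A B) \<and> (\<exists>g. is_hom g B A)"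

definition pp_power :: "'a rstruct \<Rightarrow> nat \<Rightarrow> 'a list rstruct \<Rightarrow> bool" where
  "pp_power A n C \<longleftrightarrow> n \<ge> 1 \<and>
     fst C = {t. length t = n \<and> set t \<subseteq> fst A} \<and>
     (\<forall>i<length (snd C).
        snd (snd C ! i) \<subseteq> {t. length t = fst (snd C ! i) \<and> set t \<subseteq> fst C} \<and>
        pp_definable A (fst (snd C ! i) * n) (concat ` snd (snd C ! i)))"

text \<open>A pp-constructs B: B is homomorphically equivalent to a pp-power of A.
  (Isomorphic copies are irrelevant, as isomorphisms preserve homomorphic equivalence.)\<close>
definition pp_constructs :: "'a rstruct \<Rightarrow> 'b rstruct \<Rightarrow> bool" where
  "pp_constructs A B \<longleftrightarrow> (\<exists>n C. pp_power A n C \<and> hom_equiv B C)"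

definition D3 :: "nat set" where "D3 = {0, 1, 2}"

definition psi2 :: "nat list set" where "psi2 = {[0,1], [1,0], [2,2]}"
definition mu2 :: "nat list set" where
  "mu2 = {[a,b] | a b. a \<in> {0,1} \<and> b \<in> {0,1}} \<union> {[2,2]}"
definition rho2 :: "nat list set" where
  "rho2 = {[a,b] | a b. a \<in> D3 \<and> b \<in> D3} - mu2"
definition tau0 :: "nat list set" where "tau0 = {[0,0], [1,0], [2,1]}"
definition tau1 :: "nat list set" where "tau1 = {[0,1], [1,1], [2,0]}"

definition unrel :: "nat set \<Rightarrow> nat list set" where "unrel U = {[a] | a. a \<in> U}"

definition M0 :: "nat rstruct" where
  "M0 = (D3, [(2, psi2), (2, rho2), (1, unrel {0,1}), (1, unrel {0}), (1, unrel {1}),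
             (1, unrel {2})])"

definition M0' :: "nat rstruct" where
  "M0' = (D3, [(2, psi2), (2, rho2), (2, tau0), (2, tau1), (1, unrel {0,1}), (1, unrel {0}),
              (1, unrel {1}), (1, unrel {2})])"

end

theory Submission
  imports Defs
begin

lemma rho2_eq: "rho2 = {[0,2],[1,2],[2,0],[2,1]}"
  unfolding rho2_def mu2_def D3_def by auto

lemma unrel_eq: "unrel {0,1} = {[0],[1]}" "unrel {0} = {[0]}" "unrel {1} = {[1]}" "unrel {2} = {[2]}"
  unfolding unrel_def by auto

lemma pp_def_intro:
  assumes "length xs = k"
    and "\<And>v. (\<forall>y. v y \<in> fst S) \<Longrightarrow> pp_sat S \<phi> v \<Longrightarrow> map v xs \<in> R"
    and "\<And>t. t \<in> R \<Longrightarrow> \<exists>v. (\<forall>y. v y \<in> fst S) \<and> pp_sat S \<phi> v \<and> t = map v xs"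
  shows "pp_definable S k R"
  unfolding pp_definable_def using assms by blast

definition L1 :: "nat list set \<Rightarrow> nat list list set" where
  "L1 R = (map (\<lambda>a. [a])) ` R"

definition C2 :: "nat list rstruct" where
  "C2 = ({t. length t = 1 \<and> set t \<subseteq> D3}, [(2, L1 psi2), (2, L1 rho2), (1, L1 (unrel {0,1})),
      (1, L1 (unrel {0})), (1, L1 (unrel {1})), (1, L1 (unrel {2}))])"

lemma concat_L1: "concat ` L1 R = R"
proof -
  have "concat (map (\<lambda>a. [a]) t) = t" for t :: "nat list" by (induction t) auto
  then show ?thesis unfolding L1_def image_image by simp
qed


lemma atom_definable:
  assumes "j < length (snd S)" "snd S ! j = (k, R)" "R \<subseteq> {t. length t = k \<and> set t \<subseteq> fst S}"
    "d \<in> fst S"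
  shows "pp_definable S k R"
proof (rule pp_def_intro[where xs="[0..<k]" and \<phi> = "PAtom j [0..<k]"])
  fix t assume t: "t \<in> R"
  define v where "v = (\<lambda>i. if i < k then t ! i else d)"
  have "map v [0..<k] = t" using t assms(3) unfolding v_def by (intro nth_equalityI) auto
  moreover have "\<forall>y. v y \<in> fst S" using t assms(3,4) unfolding v_def by (auto simp: subset_iff)
  ultimately show "\<exists>v. (\<forall>y. v y \<in> fst S) \<and> pp_sat S (PAtom j [0..<k]) v \<and> t = map v [0..<k]"
    using assms t by (intro exI[of _ v]) auto
qed (use assms in auto)


lemma M0'_defs:
  "pp_definable M0' 2 psi2" "pp_definable M0' 2 rho2" "pp_definable M0' 1 (unrel {0,1})" "pp_definable M0' 1 (unrel {0})" "pp_definable M0' 1 (unrel {1})" "pp_definable M0' 1 (unrel {2})"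
  apply (rule atom_definable[where d=0 and j=0]; auto simp: M0'_def psi2_def rho2_eq unrel_def D3_def)
  apply (rule atom_definable[where d=0 and j=1]; auto simp: M0'_def psi2_def rho2_eq unrel_def D3_def)
  apply (rule atom_definable[where d=0 and j=4]; auto simp: M0'_def psi2_def rho2_eq unrel_def D3_def)
  apply (rule atom_definable[where d=0 and j=5]; auto simp: M0'_def psi2_def rho2_eq unrel_def D3_def)
  apply (rule atom_definable[where d=0 and j=6]; auto simp: M0'_def psi2_def rho2_eq unrel_def D3_def)
  by (rule atom_definable[where d=0 and j=7]; auto simp: M0'_def psi2_def rho2_eq unrel_def D3_def)

lemma is_hom_alt: "is_hom h A B \<longleftrightarrow> (\<forall>a\<in>fst A. h a \<in> fst B) \<and>
   list_all2 (\<lambda>(k,R) (k',R'). k = k' \<and> (\<forall>t\<in>R. map h t \<in> R')) (snd A) (snd B)"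
  unfolding is_hom_def list_all2_conv_all_nth by (auto simp: case_prod_beta)

lemma pp_power_alt: "pp_power A n C \<longleftrightarrow> n \<ge> 1 \<and>
     fst C = {t. length t = n \<and> set t \<subseteq> fst A} \<and>
     (\<forall>(k,R)\<in>set (snd C). R \<subseteq> {t. length t = k \<and> set t \<subseteq> fst C} \<and>
        pp_definable A (k * n) (concat ` R))"
  unfolding pp_power_def by (simp add: all_set_conv_all_nth case_prod_beta)

lemma L1_sub: "R \<subseteq> {t. length t = k \<and> set t \<subseteq> D3} \<Longrightarrow>
   L1 R \<subseteq> {t. length t = k \<and> set t \<subseteq> {t. length t = 1 \<and> set t \<subseteq> D3}}"
  unfolding L1_def by fastforce

lemma dir2: "pp_constructs M0' M0"
  unfolding pp_constructs_def
proof (intro exI conjI)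
  show "pp_power M0' 1 C2"
    unfolding pp_power_alt
    apply (simp add: C2_def concat_L1 M0'_defs del: One_nat_def)
    apply (simp add: M0'_def)
    apply (auto simp: L1_def psi2_def rho2_eq unrel_def D3_def)
    done
  show "hom_equiv M0 C2"
    unfolding hom_equiv_def
  proof (intro conjI exI)
    show "is_hom (\<lambda>a. [a]) M0 C2"
      unfolding is_hom_alt by (simp add: M0_def C2_def L1_def)
    show "is_hom hd C2 M0"
      unfolding is_hom_alt apply (simp add: M0_def C2_def L1_def)
      apply (auto simp: D3_def psi2_def rho2_eq unrel_def length_Suc_conv)
      done
  qed
qed


definition enc :: "nat \<Rightarrow> nat list" where
  "enc x = [x, (if x = 1 then 2 else 0), (if x = 0 then 0 else 2)]"
definition dec :: "nat list \<Rightarrow> nat" where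
  "dec t = (if t!0 = 2 then 2 else if (t!1 = 2) = (t!2 = 2) then (if t!1 = 2 then 1 else 0) else t!0)"

definition Rpsi :: "nat list list set" where
  "Rpsi = {[[a,b,c],[d,e,f]] | a b c d e f. {a,b,c,d,e,f} \<subseteq> D3 \<and> [a,d] \<in> psi2 \<and> [b,f] \<in> rho2 \<and> [c,e] \<in> rho2}"
definition Rrho :: "nat list list set" where
  "Rrho = {[[a,b,c],[d,e,f]] | a b c d e f. {a,b,c,d,e,f} \<subseteq> D3 \<and> [a,d] \<in> rho2}"
definition Rt0 :: "nat list list set" where
  "Rt0 = {[[a,b,c],[d,e,f]] | a b c d e f. {a,b,c,d,e,f} \<subseteq> D3 \<and> d \<in> {0,1} \<and> e = f \<and>
      (\<exists>z\<in>D3. [a,z] \<in> rho2 \<and> [z,e] \<in> rho2)}"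
definition Rt1 :: "nat list list set" where
  "Rt1 = {[[a,b,c],[d,e,f]] | a b c d e f. {a,b,c,d,e,f} \<subseteq> D3 \<and> d \<in> {0,1} \<and> e = f \<and> [a,e] \<in> rho2}"
definition U01 :: "nat list list set" where
  "U01 = {[[a,b,c]] | a b c. {a,b,c} \<subseteq> D3 \<and> a \<in> {0,1}}"
definition U2 :: "nat list list set" where
  "U2 = {[[2,b,c]] | b c. {b,c} \<subseteq> D3}"

definition C1 :: "nat list rstruct" where
  "C1 = ({t. length t = 3 \<and> set t \<subseteq> D3}, [(2, Rpsi), (2, Rrho), (2, Rt0), (2, Rt1), (1, U01),
      (1, {[[0,0,0]]}), (1, {[[1,2,2]]}), (1, U2)])"

definition vec :: "nat list \<Rightarrow> nat \<Rightarrow> nat" where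
  "vec l i = (if i < length l then l ! i else 0)"

lemma vec_in: "set l \<subseteq> A \<Longrightarrow> 0 \<in> A \<Longrightarrow> vec l i \<in> A"
  unfolding vec_def by auto

lemma vec_simps: "vec l i = (if i < length l then l ! i else 0)" by (simp add: vec_def)


lemma d_psi: "pp_definable M0 6 (concat ` Rpsi)"
proof (rule pp_def_intro[where xs="[0,1,2,3,4,5]" and \<phi>="PConj (PAtom 0 [0,3]) (PConj (PAtom 1 [1,5]) (PAtom 1 [2,4]))"])
  fix t assume "t \<in> concat ` Rpsi"
  then obtain a b c d e f where "t = [a,b,c,d,e,f]" "{a,b,c,d,e,f} \<subseteq> D3" and cs: "[a,d] \<in> psi2" "[b,f] \<in> rho2" "[c,e] \<in> rho2"
    unfolding Rpsi_def by auto
  have "\<forall>y. vec [a,b,c,d,e,f] y \<in> fst M0" by (intro allI vec_in) (use \<open>_ \<subseteq> D3\<close> in \<open>auto simp: M0_def D3_def\<close>)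
  moreover have "pp_sat M0 (PConj (PAtom 0 [0,3]) (PConj (PAtom 1 [1,5]) (PAtom 1 [2,4]))) (vec [a,b,c,d,e,f])"
    using cs by (simp add: M0_def vec_def unrel_def; blast?)
  moreover have "map (vec [a,b,c,d,e,f]) [0,1,2,3,4,5] = t" using \<open>t = _\<close> by (simp add: vec_def)
  ultimately show "\<exists>v. (\<forall>y. v y \<in> fst M0) \<and> pp_sat M0 (PConj (PAtom 0 [0,3]) (PConj (PAtom 1 [1,5]) (PAtom 1 [2,4]))) v \<and> t = map v [0,1,2,3,4,5]"
    by metis
next
  fix v :: "nat \<Rightarrow> nat" assume a: "\<forall>y. v y \<in> fst M0" "pp_sat M0 (PConj (PAtom 0 [0,3]) (PConj (PAtom 1 [1,5]) (PAtom 1 [2,4]))) v"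
  show "map v [0,1,2,3,4,5] \<in> concat ` Rpsi"
  proof (rule image_eqI[where x="[[v 0, v 1, v 2],[v 3, v 4, v 5]]"])
    show "map v [0,1,2,3,4,5] = concat ([[v 0, v 1, v 2],[v 3, v 4, v 5]])" by simp
    have "\<forall>y. v y \<in> D3" using a(1) by (simp add: M0_def)
    then show "[[v 0, v 1, v 2],[v 3, v 4, v 5]] \<in> Rpsi" unfolding Rpsi_def using a(2)
      by (simp add: M0_def unrel_def; auto?)
  qed
qed simp

lemma d_rho: "pp_definable M0 6 (concat ` Rrho)"
proof (rule pp_def_intro[where xs="[0,1,2,3,4,5]" and \<phi>="PAtom 1 [0,3]"])
  fix t assume "t \<in> concat ` Rrho"
  then obtain a b c d e f where "t = [a,b,c,d,e,f]" "{a,b,c,d,e,f} \<subseteq> D3" and cs: "[a,d] \<in> rho2"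
    unfolding Rrho_def by auto
  have "\<forall>y. vec [a,b,c,d,e,f] y \<in> fst M0" by (intro allI vec_in) (use \<open>_ \<subseteq> D3\<close> in \<open>auto simp: M0_def D3_def\<close>)
  moreover have "pp_sat M0 (PAtom 1 [0,3]) (vec [a,b,c,d,e,f])"
    using cs by (simp add: M0_def vec_def unrel_def; blast?)
  moreover have "map (vec [a,b,c,d,e,f]) [0,1,2,3,4,5] = t" using \<open>t = _\<close> by (simp add: vec_def)
  ultimately show "\<exists>v. (\<forall>y. v y \<in> fst M0) \<and> pp_sat M0 (PAtom 1 [0,3]) v \<and> t = map v [0,1,2,3,4,5]"
    by metis
next
  fix v :: "nat \<Rightarrow> nat" assume a: "\<forall>y. v y \<in> fst M0" "pp_sat M0 (PAtom 1 [0,3]) v"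
  show "map v [0,1,2,3,4,5] \<in> concat ` Rrho"
  proof (rule image_eqI[where x="[[v 0, v 1, v 2],[v 3, v 4, v 5]]"])
    show "map v [0,1,2,3,4,5] = concat ([[v 0, v 1, v 2],[v 3, v 4, v 5]])" by simp
    have "\<forall>y. v y \<in> D3" using a(1) by (simp add: M0_def)
    then show "[[v 0, v 1, v 2],[v 3, v 4, v 5]] \<in> Rrho" unfolding Rrho_def using a(2)
      by (simp add: M0_def unrel_def; auto?)
  qed
qed simp

lemma d_t0: "pp_definable M0 6 (concat ` Rt0)"
proof (rule pp_def_intro[where xs="[0,1,2,3,4,5]" and \<phi>="PConj (PAtom 2 [3]) (PConj (PEq 4 5) (PEx 6 (PConj (PAtom 1 [0,6]) (PAtom 1 [6,4]))))"])
  fix t assume "t \<in> concat ` Rt0"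
  then obtain a b c d e f z where "t = [a,b,c,d,e,f]" "{a,b,c,d,e,f} \<subseteq> D3" and cs: "d \<in> {0,1}" "e = f" "z \<in> D3" "[a,z] \<in> rho2" "[z,e] \<in> rho2"
    unfolding Rt0_def by auto
  have "\<forall>y. vec [a,b,c,d,e,f] y \<in> fst M0" by (intro allI vec_in) (use \<open>_ \<subseteq> D3\<close> in \<open>auto simp: M0_def D3_def\<close>)
  moreover have "pp_sat M0 (PConj (PAtom 2 [3]) (PConj (PEq 4 5) (PEx 6 (PConj (PAtom 1 [0,6]) (PAtom 1 [6,4]))))) (vec [a,b,c,d,e,f])"
    using cs by (simp add: M0_def vec_def unrel_def; blast?)
  moreover have "map (vec [a,b,c,d,e,f]) [0,1,2,3,4,5] = t" using \<open>t = _\<close> by (simp add: vec_def)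
  ultimately show "\<exists>v. (\<forall>y. v y \<in> fst M0) \<and> pp_sat M0 (PConj (PAtom 2 [3]) (PConj (PEq 4 5) (PEx 6 (PConj (PAtom 1 [0,6]) (PAtom 1 [6,4]))))) v \<and> t = map v [0,1,2,3,4,5]"
    by metis
next
  fix v :: "nat \<Rightarrow> nat" assume a: "\<forall>y. v y \<in> fst M0" "pp_sat M0 (PConj (PAtom 2 [3]) (PConj (PEq 4 5) (PEx 6 (PConj (PAtom 1 [0,6]) (PAtom 1 [6,4]))))) v"
  show "map v [0,1,2,3,4,5] \<in> concat ` Rt0"
  proof (rule image_eqI[where x="[[v 0, v 1, v 2],[v 3, v 4, v 5]]"])
    show "map v [0,1,2,3,4,5] = concat ([[v 0, v 1, v 2],[v 3, v 4, v 5]])" by simp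
    have "\<forall>y. v y \<in> D3" using a(1) by (simp add: M0_def)
    then show "[[v 0, v 1, v 2],[v 3, v 4, v 5]] \<in> Rt0" unfolding Rt0_def using a(2)
      by (simp add: M0_def unrel_def; auto?)
  qed
qed simp

lemma d_t1: "pp_definable M0 6 (concat ` Rt1)"
proof (rule pp_def_intro[where xs="[0,1,2,3,4,5]" and \<phi>="PConj (PAtom 2 [3]) (PConj (PEq 4 5) (PAtom 1 [0,4]))"])
  fix t assume "t \<in> concat ` Rt1"
  then obtain a b c d e f where "t = [a,b,c,d,e,f]" "{a,b,c,d,e,f} \<subseteq> D3" and cs: "d \<in> {0,1}" "e = f" "[a,e] \<in> rho2"
    unfolding Rt1_def by auto
  have "\<forall>y. vec [a,b,c,d,e,f] y \<in> fst M0" by (intro allI vec_in) (use \<open>_ \<subseteq> D3\<close> in \<open>auto simp: M0_def D3_def\<close>)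
  moreover have "pp_sat M0 (PConj (PAtom 2 [3]) (PConj (PEq 4 5) (PAtom 1 [0,4]))) (vec [a,b,c,d,e,f])"
    using cs by (simp add: M0_def vec_def unrel_def; blast?)
  moreover have "map (vec [a,b,c,d,e,f]) [0,1,2,3,4,5] = t" using \<open>t = _\<close> by (simp add: vec_def)
  ultimately show "\<exists>v. (\<forall>y. v y \<in> fst M0) \<and> pp_sat M0 (PConj (PAtom 2 [3]) (PConj (PEq 4 5) (PAtom 1 [0,4]))) v \<and> t = map v [0,1,2,3,4,5]"
    by metis
next
  fix v :: "nat \<Rightarrow> nat" assume a: "\<forall>y. v y \<in> fst M0" "pp_sat M0 (PConj (PAtom 2 [3]) (PConj (PEq 4 5) (PAtom 1 [0,4]))) v"
  show "map v [0,1,2,3,4,5] \<in> concat ` Rt1"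
  proof (rule image_eqI[where x="[[v 0, v 1, v 2],[v 3, v 4, v 5]]"])
    show "map v [0,1,2,3,4,5] = concat ([[v 0, v 1, v 2],[v 3, v 4, v 5]])" by simp
    have "\<forall>y. v y \<in> D3" using a(1) by (simp add: M0_def)
    then show "[[v 0, v 1, v 2],[v 3, v 4, v 5]] \<in> Rt1" unfolding Rt1_def using a(2)
      by (simp add: M0_def unrel_def; auto?)
  qed
qed simp

lemma d_u01: "pp_definable M0 3 (concat ` U01)"
proof (rule pp_def_intro[where xs="[0,1,2]" and \<phi>="PAtom 2 [0]"])
  fix t assume "t \<in> concat ` U01"
  then obtain a b c where "t = [a,b,c]" "{a,b,c} \<subseteq> D3" and cs: "a \<in> {0,1}"
    unfolding U01_def by auto
  have "\<forall>y. vec [a,b,c] y \<in> fst M0" by (intro allI vec_in) (use \<open>_ \<subseteq> D3\<close> in \<open>auto simp: M0_def D3_def\<close>)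
  moreover have "pp_sat M0 (PAtom 2 [0]) (vec [a,b,c])"
    using cs by (simp add: M0_def vec_def unrel_def; blast?)
  moreover have "map (vec [a,b,c]) [0,1,2] = t" using \<open>t = _\<close> by (simp add: vec_def)
  ultimately show "\<exists>v. (\<forall>y. v y \<in> fst M0) \<and> pp_sat M0 (PAtom 2 [0]) v \<and> t = map v [0,1,2]"
    by metis
next
  fix v :: "nat \<Rightarrow> nat" assume a: "\<forall>y. v y \<in> fst M0" "pp_sat M0 (PAtom 2 [0]) v"
  show "map v [0,1,2] \<in> concat ` U01"
  proof (rule image_eqI[where x="[[v 0, v 1, v 2]]"])
    show "map v [0,1,2] = concat ([[v 0, v 1, v 2]])" by simp
    have "\<forall>y. v y \<in> D3" using a(1) by (simp add: M0_def)
    then show "[[v 0, v 1, v 2]] \<in> U01" unfolding U01_def using a(2)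
      by (simp add: M0_def unrel_def; auto?)
  qed
qed simp

lemma d_u2: "pp_definable M0 3 (concat ` U2)"
proof (rule pp_def_intro[where xs="[0,1,2]" and \<phi>="PAtom 5 [0]"])
  fix t assume "t \<in> concat ` U2"
  then obtain b c where "t = [2,b,c]" "{b,c} \<subseteq> D3" and cs: "True"
    unfolding U2_def by auto
  have "\<forall>y. vec [2,b,c] y \<in> fst M0" by (intro allI vec_in) (use \<open>_ \<subseteq> D3\<close> in \<open>auto simp: M0_def D3_def\<close>)
  moreover have "pp_sat M0 (PAtom 5 [0]) (vec [2,b,c])"
    using cs by (simp add: M0_def vec_def unrel_def; blast?)
  moreover have "map (vec [2,b,c]) [0,1,2] = t" using \<open>t = _\<close> by (simp add: vec_def)
  ultimately show "\<exists>v. (\<forall>y. v y \<in> fst M0) \<and> pp_sat M0 (PAtom 5 [0]) v \<and> t = map v [0,1,2]"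
    by metis
next
  fix v :: "nat \<Rightarrow> nat" assume a: "\<forall>y. v y \<in> fst M0" "pp_sat M0 (PAtom 5 [0]) v"
  show "map v [0,1,2] \<in> concat ` U2"
  proof (rule image_eqI[where x="[[v 0, v 1, v 2]]"])
    show "map v [0,1,2] = concat ([[v 0, v 1, v 2]])" by simp
    have "\<forall>y. v y \<in> D3" using a(1) by (simp add: M0_def)
    then show "[[v 0, v 1, v 2]] \<in> U2" unfolding U2_def using a(2)
      by (simp add: M0_def unrel_def; auto?)
  qed
qed simp
lemma d_u0: "pp_definable M0 3 (concat ` {[[0,0,0]]})"
proof (rule pp_def_intro[where xs="[0,1,2]" and \<phi>="PConj (PAtom 3 [0]) (PConj (PAtom 3 [1]) (PAtom 3 [2]))"])
  fix t assume "t \<in> concat ` {[[0::nat,0,0]]}"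
  then have "t = [0,0,0]" by simp
  moreover have "\<forall>y. vec [0,0,0] y \<in> fst M0" by (intro allI vec_in) (auto simp: M0_def D3_def)
  moreover have "pp_sat M0 (PConj (PAtom 3 [0]) (PConj (PAtom 3 [1]) (PAtom 3 [2]))) (vec [0,0,0])"
    by (simp add: M0_def unrel_def vec_def)
  moreover have "map (vec [0,0,0]) [0,1,2] = [0,0,0]" by (simp add: vec_def)
  ultimately show "\<exists>v. (\<forall>y. v y \<in> fst M0) \<and> pp_sat M0 (PConj (PAtom 3 [0]) (PConj (PAtom 3 [1]) (PAtom 3 [2]))) v \<and> t = map v [0,1,2]"
    by metis
next
  fix v :: "nat \<Rightarrow> nat" assume "pp_sat M0 (PConj (PAtom 3 [0]) (PConj (PAtom 3 [1]) (PAtom 3 [2]))) v"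
  then show "map v [0,1,2] \<in> concat ` {[[0,0,0]]}" by (simp add: M0_def unrel_def)
qed simp
lemma d_u1: "pp_definable M0 3 (concat ` {[[1,2,2]]})"
proof (rule pp_def_intro[where xs="[0,1,2]" and \<phi>="PConj (PAtom 4 [0]) (PConj (PAtom 5 [1]) (PAtom 5 [2]))"])
  fix t assume "t \<in> concat ` {[[1::nat,2,2]]}"
  then have "t = [1,2,2]" by simp
  moreover have "\<forall>y. vec [1,2,2] y \<in> fst M0" by (intro allI vec_in) (auto simp: M0_def D3_def)
  moreover have "pp_sat M0 (PConj (PAtom 4 [0]) (PConj (PAtom 5 [1]) (PAtom 5 [2]))) (vec [1,2,2])"
    by (simp add: M0_def unrel_def vec_def)
  moreover have "map (vec [1,2,2]) [0,1,2] = [1,2,2]" by (simp add: vec_def)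
  ultimately show "\<exists>v. (\<forall>y. v y \<in> fst M0) \<and> pp_sat M0 (PConj (PAtom 4 [0]) (PConj (PAtom 5 [1]) (PAtom 5 [2]))) v \<and> t = map v [0,1,2]"
    by metis
next
  fix v :: "nat \<Rightarrow> nat" assume "pp_sat M0 (PConj (PAtom 4 [0]) (PConj (PAtom 5 [1]) (PAtom 5 [2]))) v"
  then show "map v [0,1,2] \<in> concat ` {[[1,2,2]]}" by (simp add: M0_def unrel_def)
qed simp

lemma D3_2: "2 \<in> D3" by (simp add: D3_def)

lemma subs0: "Rpsi \<subseteq> {t. length t = 2 \<and> set t \<subseteq> {t. length t = 3 \<and> set t \<subseteq> D3}}"
  unfolding Rpsi_def Rrho_def Rt0_def Rt1_def U01_def U2_def by auto
lemma subs1: "Rrho \<subseteq> {t. length t = 2 \<and> set t \<subseteq> {t. length t = 3 \<and> set t \<subseteq> D3}}"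
  unfolding Rpsi_def Rrho_def Rt0_def Rt1_def U01_def U2_def by auto
lemma subs2: "Rt0 \<subseteq> {t. length t = 2 \<and> set t \<subseteq> {t. length t = 3 \<and> set t \<subseteq> D3}}"
  unfolding Rpsi_def Rrho_def Rt0_def Rt1_def U01_def U2_def by auto
lemma subs3: "Rt1 \<subseteq> {t. length t = 2 \<and> set t \<subseteq> {t. length t = 3 \<and> set t \<subseteq> D3}}"
  unfolding Rpsi_def Rrho_def Rt0_def Rt1_def U01_def U2_def by auto
lemma subs4: "U01 \<subseteq> {t. length t = 1 \<and> set t \<subseteq> {t. length t = 3 \<and> set t \<subseteq> D3}}"
  unfolding Rpsi_def Rrho_def Rt0_def Rt1_def U01_def U2_def by auto
lemma subs5: "U2 \<subseteq> {t. length t = 1 \<and> set t \<subseteq> {t. length t = 3 \<and> set t \<subseteq> D3}}"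
  unfolding U2_def by (auto simp: D3_2)
lemma subs6: "{[[0,0,0]]} \<subseteq> {t. length t = 1 \<and> set t \<subseteq> {t. length t = 3 \<and> set t \<subseteq> D3}}"
  by (simp add: D3_def)
lemma subs7: "{[[1,2,2]]} \<subseteq> {t. length t = 1 \<and> set t \<subseteq> {t. length t = 3 \<and> set t \<subseteq> D3}}"
  by (simp add: D3_def)
lemmas subs = subs0 subs1 subs2 subs3 subs4 subs5 subs6 subs7

lemma rho2_iff: "[x,y] \<in> rho2 \<longleftrightarrow> x \<in> D3 \<and> y \<in> D3 \<and> (x = 2 \<longleftrightarrow> y \<noteq> 2)"
  unfolding rho2_eq D3_def by auto

lemma dec_D3: "{a,b,c} \<subseteq> D3 \<Longrightarrow> dec [a,b,c] \<in> D3"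
  unfolding dec_def D3_def by auto

lemma dec_2: "dec [a,b,c] = 2 \<longleftrightarrow> a = 2"
  unfolding dec_def by auto

lemma dec_01: "{a,b,c} \<subseteq> D3 \<Longrightarrow> a \<noteq> 2 \<Longrightarrow> dec [a,b,c] \<in> {0,1}"
  using dec_D3[of a b c] dec_2[of a b c] unfolding D3_def by auto


lemma dec_same: "a \<noteq> 2 \<Longrightarrow> dec [a,e,e] = (if e = 2 then 1 else 0)"
  unfolding dec_def by auto

lemma hdec_t0: "\<forall>t\<in>Rt0. map dec t \<in> tau0"
proof
  fix t assume "t \<in> Rt0"
  then obtain a b c d e z where t: "t = [[a,b,c],[d,e,e]]" "{a,b,c,d,e} \<subseteq> D3" "d \<in> {0,1}" "z \<in> D3"
    "[a,z] \<in> rho2" "[z,e] \<in> rho2" unfolding Rt0_def by auto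
  have d2: "d \<noteq> 2" using t(3) by auto
  show "map dec t \<in> tau0"
  proof (cases "a = 2")
    case True
    then have "e = 2" using t(5,6) by (auto simp: rho2_iff)
    then show ?thesis using True t(1) d2 by (simp add: dec_same dec_2 tau0_def)
  next
    case False
    then have "e \<noteq> 2" using t(5,6) by (auto simp: rho2_iff)
    moreover have "dec [a,b,c] \<in> {0,1}" using dec_01 t(2) False by auto
    ultimately show ?thesis using t(1) d2 by (auto simp: dec_same tau0_def)
  qed
qed

lemma hdec_t1: "\<forall>t\<in>Rt1. map dec t \<in> tau1"
proof
  fix t assume "t \<in> Rt1"
  then obtain a b c d e where t: "t = [[a,b,c],[d,e,e]]" "{a,b,c,d,e} \<subseteq> D3" "d \<in> {0,1}"
    "[a,e] \<in> rho2" unfolding Rt1_def by auto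
  have d2: "d \<noteq> 2" using t(3) by auto
  show "map dec t \<in> tau1"
  proof (cases "a = 2")
    case True
    then have "e \<noteq> 2" using t(4) by (auto simp: rho2_iff)
    then show ?thesis using True t(1) d2 by (simp add: dec_same dec_2 tau1_def)
  next
    case False
    then have "e = 2" using t(4) by (auto simp: rho2_iff)
    moreover have "dec [a,b,c] \<in> {0,1}" using dec_01 t(2) False by auto
    ultimately show ?thesis using t(1) d2 by (auto simp: dec_same tau1_def)
  qed
qed

lemma henc:
  "\<forall>t\<in>psi2. map enc t \<in> Rpsi" "\<forall>t\<in>rho2. map enc t \<in> Rrho"
  "\<forall>t\<in>tau0. map enc t \<in> Rt0" "\<forall>t\<in>tau1. map enc t \<in> Rt1"
  "\<forall>t\<in>unrel {0,1}. map enc t \<in> U01" "\<forall>t\<in>unrel {2}. map enc t \<in> U2"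
  "\<forall>t\<in>unrel {0}. map enc t \<in> {[[0,0,0]]}" "\<forall>t\<in>unrel {1}. map enc t \<in> {[[1,2,2]]}"
  "\<forall>a\<in>D3. enc a \<in> {t. length t = 3 \<and> set t \<subseteq> D3}"
  subgoal unfolding Rpsi_def by (auto simp: enc_def psi2_def rho2_eq D3_def)
  subgoal unfolding Rrho_def by (auto simp: enc_def rho2_eq D3_def)
  subgoal unfolding Rt0_def by (auto simp: enc_def rho2_eq tau0_def D3_def)
  subgoal unfolding Rt1_def by (auto simp: enc_def rho2_eq tau1_def D3_def)
  subgoal unfolding U01_def by (auto simp: enc_def unrel_def D3_def)
  subgoal unfolding U2_def by (auto simp: enc_def unrel_def D3_def)
  subgoal by (auto simp: enc_def unrel_def)
  subgoal by (auto simp: enc_def unrel_def)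
  subgoal by (auto simp: enc_def D3_def)
  done

lemma hdec:
  "\<forall>t\<in>Rpsi. map dec t \<in> psi2" "\<forall>t\<in>Rrho. map dec t \<in> rho2"
  "\<forall>t\<in>Rt0. map dec t \<in> tau0" "\<forall>t\<in>Rt1. map dec t \<in> tau1"
  "\<forall>t\<in>U01. map dec t \<in> unrel {0,1}" "\<forall>t\<in>U2. map dec t \<in> unrel {2}"
  "\<forall>t\<in>{[[0,0,0]]}. map dec t \<in> unrel {0}" "\<forall>t\<in>{[[1,2,2]]}. map dec t \<in> unrel {1}"
  "\<forall>a\<in>{t. length t = 3 \<and> set t \<subseteq> D3}. dec a \<in> D3"
  subgoal unfolding Rpsi_def by (auto simp: dec_def psi2_def rho2_eq)
  subgoal unfolding Rrho_def by (auto simp: rho2_iff dec_2 intro!: dec_D3)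
  subgoal by (rule hdec_t0)
  subgoal by (rule hdec_t1)
  subgoal
  proof
    fix t assume "t \<in> U01"
    then obtain a b c where "t = [[a,b,c]]" "{a,b,c} \<subseteq> D3" "a \<noteq> 2" unfolding U01_def by auto
    then show "map dec t \<in> unrel {0,1}" using dec_01[of a b c] by (auto simp: unrel_def)
  qed
  subgoal unfolding U2_def by (auto simp: dec_def unrel_def)
  subgoal by (auto simp: dec_def unrel_def)
  subgoal by (auto simp: dec_def unrel_def)
  subgoal
  proof
    fix t :: "nat list" assume "t \<in> {t. length t = 3 \<and> set t \<subseteq> D3}"
    then have l: "length t = 3" and s: "set t \<subseteq> D3" by auto
    then obtain a b c where "t = [a,b,c]" by (auto simp: numeral_3_eq_3 length_Suc_conv)
    then show "dec t \<in> D3" using s dec_D3[of a b c] by simp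
  qed
  done

lemma dir1: "pp_constructs M0 M0'"
  unfolding pp_constructs_def
proof (intro exI conjI)
  show "pp_power M0 3 C1"
    unfolding pp_power_alt
    by (simp add: C1_def d_psi d_rho d_t0 d_t1 d_u01 d_u2 d_u0[simplified] d_u1[simplified] subs[simplified] M0_def[THEN arg_cong[where f=fst], simplified])
      (simp add: D3_def)?
  show "hom_equiv M0' C1"
    unfolding hom_equiv_def
  proof (intro conjI exI)
    show "is_hom enc M0' C1"
      unfolding is_hom_alt 
      by (simp add: M0'_def C1_def henc[simplified])
    show "is_hom dec C1 M0'"
      unfolding is_hom_alt 
      by (simp add: M0'_def C1_def hdec[simplified])
  qed
qed
theorem lemma6p5:
  shows "pp_constructs M0 M0' \<and> pp_constructs M0' M0"
  using dir1 dir2 by blast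


end
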